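(* Let $r\in\mathbb{N}$, $\alpha\in\mathbb{N}$, $\beta>\frac{r+1}{2\alpha}$, let $f\in C(\mathbb{R})$ with $f\in L_1(\mathbb{R})$, and let $\xi>0$. Then $$\|M_{r,\xi}f-f\|_1\le\frac{2\alpha\Gamma(\beta)}{\Gamma(\frac{1}{2\alpha})\Gamma(\beta-\frac{1}{2\alpha})}\left(\int_0^\infty(1+t)^r\frac{1}{(t^{2\alpha}+1)^{\beta}}dt\right)\omega_r(f,\xi)_1.$$ Hence $M_{r,\xi}\to I$ (the unit operator) in the $L_1$ norm as $\xi\to0$.
   Context: Here $n=0$: set $\alpha_j=(-1)^{r-j}\binom{r}{j}$ for $j=1,\dots,r$ and $\alpha_0=1-\sum_{j=1}^r(-1)^{r-j}\binom{r}{j}$. For $\alpha\in\mathbb{N}$, $\beta>\frac{1}{2\alpha}$, $\xi>0$, let $W=\frac{\Gamma(\beta)\alpha\xi^{2\alpha\beta-1}}{\Gamma(\frac{1}{2\alpha})\Gamma(\beta-\frac{1}{2\alpha})}$ and $M_{r,\xi}(f;x)=W\int_{-\infty}^{\infty}\frac{\sum_{j=0}^r\alpha_jf(x+jt)}{(t^{2\alpha}+\xi^{2\alpha})^{\beta}}dt$, $x\in\mathbb{R}$. For $g\in L_1(\mathbb{R})$, $\Delta_t^rg(x)=\sum_{j=0}^r(-1)^{r-j}\binom{r}{j}g(x+jt)$ and $\omega_r(g,h)_1=\sup_{|t|\le h}\|\Delta_t^rg(x)\|_{1,x}$, $h>0$. *)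

theory Defs
  imports "HOL-Analysis.Analysis"
begin

definition alpha_coef :: "nat \<Rightarrow> nat \<Rightarrow> real" where
  "alpha_coef r j = (if j = 0
      then 1 - (\<Sum>i=1..r. (-1) ^ (r - i) * real (r choose i))
      else (-1) ^ (r - j) * real (r choose j))"

definition W_const :: "nat \<Rightarrow> real \<Rightarrow> real \<Rightarrow> real" where
  "W_const a \<beta> \<xi> = Gamma \<beta> * real a * \<xi> powr (2 * real a * \<beta> - 1) /
      (Gamma (1 / (2 * real a)) * Gamma (\<beta> - 1 / (2 * real a)))"

text \<open>The operator M_{r,xi} (parameters alpha = a, beta).\<close>
definition M_op :: "nat \<Rightarrow> nat \<Rightarrow> real \<Rightarrow> real \<Rightarrow> (real \<Rightarrow> real) \<Rightarrow> real \<Rightarrow> real" where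
  "M_op r a \<beta> \<xi> f x = W_const a \<beta> \<xi> *
      (LINT t|lborel. (\<Sum>j=0..r. alpha_coef r j * f (x + real j * t)) /
                      (t ^ (2 * a) + \<xi> ^ (2 * a)) powr \<beta>)"

definition L1_norm :: "(real \<Rightarrow> real) \<Rightarrow> real" where
  "L1_norm g = (LINT x|lborel. \<bar>g x\<bar>)"

definition fdiff :: "nat \<Rightarrow> real \<Rightarrow> (real \<Rightarrow> real) \<Rightarrow> real \<Rightarrow> real" where
  "fdiff r t g x = (\<Sum>j=0..r. (-1) ^ (r - j) * real (r choose j) * g (x + real j * t))"

definition omega1 :: "nat \<Rightarrow> (real \<Rightarrow> real) \<Rightarrow> real \<Rightarrow> real" where
  "omega1 r g h = (SUP t\<in>{-h..h}. L1_norm (fdiff r t g))"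

end

theory Submission
  imports Defs "HOL-Real_Asymp.Real_Asymp"
begin


definition Dop :: "real \<Rightarrow> (real \<Rightarrow> real) \<Rightarrow> real \<Rightarrow> real" where
  "Dop h g = (\<lambda>x. g (x + h) - g x)"

lemma alt_sum_Suc:
  fixes u :: "nat \<Rightarrow> real"
  shows "(\<Sum>j\<le>Suc r. (-1) ^ (Suc r - j) * real (Suc r choose j) * u j)
       = (\<Sum>j\<le>r. (-1) ^ (r - j) * real (r choose j) * u (Suc j))
       - (\<Sum>j\<le>r. (-1) ^ (r - j) * real (r choose j) * u j)"
proof -
  have A: "(\<Sum>j\<le>Suc r. (-1) ^ (Suc r - j) * real (Suc r choose j) * u j)
      = (-1) ^ Suc r * u 0 + (\<Sum>j\<le>r. (-1) ^ (r - j) * real (r choose j) * u (Suc j))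
        + (\<Sum>j\<le>r. (-1) ^ (r - j) * real (r choose Suc j) * u (Suc j))"
    by (simp add: sum.atMost_Suc_shift sum.distrib algebra_simps del: sum.atMost_Suc)
  have B: "(\<Sum>j\<le>r. (-1) ^ (r - j) * real (r choose j) * u j)
      = (-1) ^ r * u 0 + (\<Sum>j<r. (-1) ^ (r - Suc j) * real (r choose Suc j) * u (Suc j))"
    unfolding lessThan_Suc_atMost[symmetric] sum.lessThan_Suc_shift by simp
  have C: "(\<Sum>j\<le>r. (-1) ^ (r - j) * real (r choose Suc j) * u (Suc j))
      = - (\<Sum>j<r. (-1) ^ (r - Suc j) * real (r choose Suc j) * u (Suc j))"
  proof -
    have "(\<Sum>j\<le>r. (-1) ^ (r - j) * real (r choose Suc j) * u (Suc j))
        = (\<Sum>j<r. (-1) ^ (r - j) * real (r choose Suc j) * u (Suc j))"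
      unfolding lessThan_Suc_atMost[symmetric] by simp
    also have "\<dots> = (\<Sum>j<r. - ((-1) ^ (r - Suc j) * real (r choose Suc j) * u (Suc j)))"
    proof (rule sum.cong[OF refl])
      fix j assume "j \<in> {..<r}"
      hence "r - j = Suc (r - Suc j)" by auto
      thus "(-1) ^ (r - j) * real (r choose Suc j) * u (Suc j) = - ((-1) ^ (r - Suc j) * real (r choose Suc j) * u (Suc j))"
        by simp
    qed
    finally show ?thesis by (simp add: sum_negf)
  qed
  show ?thesis unfolding A B C by simp
qed

lemma fdiff_Suc: "fdiff (Suc r) h g = Dop h (fdiff r h g)"
proof
  fix x
  let ?u = "\<lambda>j. g (x + real j * h)"
  have "fdiff (Suc r) h g x = (\<Sum>j\<le>Suc r. (-1) ^ (Suc r - j) * real (Suc r choose j) * ?u j)"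
    by (simp add: fdiff_def atLeast0AtMost)
  also have "\<dots> = (\<Sum>j\<le>r. (-1) ^ (r - j) * real (r choose j) * ?u (Suc j))
       - (\<Sum>j\<le>r. (-1) ^ (r - j) * real (r choose j) * ?u j)" by (rule alt_sum_Suc)
  also have "\<dots> = Dop h (fdiff r h g) x"
    by (simp add: Dop_def fdiff_def atLeast0AtMost algebra_simps)
  finally show "fdiff (Suc r) h g x = Dop h (fdiff r h g) x" .
qed

lemma fdiff_0: "fdiff 0 h g = g"
  by (simp add: fdiff_def fun_eq_iff)

lemma fdiff_funpow: "fdiff r h g = (Dop h ^^ r) g"
  by (induction r) (simp_all add: fdiff_0 fdiff_Suc)

lemma integrable_shift:
  fixes g :: "real \<Rightarrow> real"
  assumes "integrable lborel g" shows "integrable lborel (\<lambda>x. g (x + s))"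
  using lborel_integrable_real_affine[OF assms, of 1 s] by (simp add: add.commute)

lemma L1_shift: "L1_norm (\<lambda>x. g (x + s)) = L1_norm g"
  unfolding L1_norm_def
  using lborel_integral_real_affine[of 1 "\<lambda>x. \<bar>g x\<bar>" s] by (simp add: add.commute)

lemma L1_norm_nonneg: "L1_norm g \<ge> 0"
  unfolding L1_norm_def by simp

lemma integrable_Dop: "integrable lborel g \<Longrightarrow> integrable lborel (Dop h g)"
  unfolding Dop_def by (intro Bochner_Integration.integrable_diff integrable_shift)

lemma integrable_Dop_pow: "integrable lborel g \<Longrightarrow> integrable lborel ((Dop h ^^ n) g)"
  by (induction n) (simp_all add: integrable_Dop)

lemma L1_triangle:
  assumes "integrable lborel u" "integrable lborel v"
  shows "L1_norm (\<lambda>x. u x - v x) \<le> L1_norm u + L1_norm v"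
proof -
  have "L1_norm (\<lambda>x. u x - v x) \<le> (LINT x|lborel. \<bar>u x\<bar> + \<bar>v x\<bar>)"
    unfolding L1_norm_def using assms
    by (intro integral_mono) (auto intro!: Bochner_Integration.integrable_add)
  also have "\<dots> = L1_norm u + L1_norm v"
    unfolding L1_norm_def using assms by (intro Bochner_Integration.integral_add) auto
  finally show ?thesis .
qed

lemma L1_Dop: "integrable lborel g \<Longrightarrow> L1_norm (Dop h g) \<le> 2 * L1_norm g"
proof -
  assume g: "integrable lborel g"
  have "L1_norm (\<lambda>x. g (x + h) - g x) \<le> L1_norm (\<lambda>x. g (x + h)) + L1_norm g"
    by (rule L1_triangle[OF integrable_shift[OF g] g])
  thus ?thesis unfolding Dop_def L1_shift by simp
qed

lemma L1_Dop_pow: "integrable lborel g \<Longrightarrow> L1_norm ((Dop h ^^ n) g) \<le> 2 ^ n * L1_norm g"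
proof (induction n)
  case (Suc n)
  have "L1_norm ((Dop h ^^ Suc n) g) \<le> 2 * L1_norm ((Dop h ^^ n) g)"
    using L1_Dop[OF integrable_Dop_pow[OF Suc.prems]] by simp
  also have "\<dots> \<le> 2 * (2 ^ n * L1_norm g)" using Suc by simp
  finally show ?case by simp
qed simp

lemma Dop_shiftsum:
  "Dop s (\<lambda>x. \<Sum>k\<in>K. \<phi> k (x + c k)) = (\<lambda>x. \<Sum>k\<in>K. Dop s (\<phi> k) (x + c k))"
  unfolding Dop_def by (simp add: sum_subtractf algebra_simps)

lemma Dop_pow_shiftsum:
  "(Dop s ^^ n) (\<lambda>x. \<Sum>k\<in>K. \<phi> k (x + c k)) = (\<lambda>x. \<Sum>k\<in>K. (Dop s ^^ n) (\<phi> k) (x + c k))"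
proof (induction n)
  case (Suc n)
  show ?case using Dop_shiftsum[where s=s and K=K and \<phi>="\<lambda>k. (Dop s ^^ n) (\<phi> k)" and c=c] by (simp add: Suc)
qed simp

lemma Dop_mult: "Dop (real m * h) g = (\<lambda>x. \<Sum>k<m. Dop h g (x + real k * h))"
proof
  fix x
  have "(\<Sum>k<m. Dop h g (x + real k * h)) = (\<Sum>k<m. g (x + real (Suc k) * h) - g (x + real k * h))"
    unfolding Dop_def by (simp add: algebra_simps)
  also have "\<dots> = g (x + real m * h) - g (x + real 0 * h)"
    by (rule sum_lessThan_telescope[of "\<lambda>k. g (x + real k * h)"])
  finally show "Dop (real m * h) g x = (\<Sum>k<m. Dop h g (x + real k * h))"
    by (simp add: Dop_def)
qed

lemma L1_sum_shift:
  assumes "integrable lborel \<psi>"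
  shows "L1_norm (\<lambda>x. \<Sum>k<m. \<psi> (x + c k)) \<le> real m * L1_norm \<psi>"
proof -
  have I: "integrable lborel (\<lambda>x. \<psi> (x + c k))" for k by (rule integrable_shift[OF assms])
  have "L1_norm (\<lambda>x. \<Sum>k<m. \<psi> (x + c k)) \<le> (LINT x|lborel. (\<Sum>k<m. \<bar>\<psi> (x + c k)\<bar>))"
    unfolding L1_norm_def using I
    by (intro integral_mono) (auto intro!: Bochner_Integration.integrable_sum sum_abs)
  also have "\<dots> = (\<Sum>k<m. L1_norm (\<lambda>x. \<psi> (x + c k)))"
    unfolding L1_norm_def using I by (intro Bochner_Integration.integral_sum) auto
  also have "\<dots> = real m * L1_norm \<psi>" by (simp add: L1_shift)
  finally show ?thesis .
qed

lemma L1_Dop_mult: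
  "integrable lborel g \<Longrightarrow> L1_norm ((Dop (real m * h) ^^ n) g) \<le> real m ^ n * L1_norm ((Dop h ^^ n) g)"
proof (induction n arbitrary: g)
  case (Suc n)
  have "(Dop (real m * h) ^^ Suc n) g = (Dop (real m * h) ^^ n) (Dop (real m * h) g)"
    by (simp add: funpow_Suc_right del: funpow.simps)
  also have "\<dots> = (\<lambda>x. \<Sum>k<m. (Dop (real m * h) ^^ n) (Dop h g) (x + real k * h))"
    unfolding Dop_mult[of m h g]
    by (rule Dop_pow_shiftsum[where \<phi>="\<lambda>k. Dop h g" and c="\<lambda>k. real k * h"])
  finally have eq: "(Dop (real m * h) ^^ Suc n) g = \<dots>" .
  have "L1_norm ((Dop (real m * h) ^^ Suc n) g) \<le> real m * L1_norm ((Dop (real m * h) ^^ n) (Dop h g))"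
    unfolding eq by (intro L1_sum_shift integrable_Dop_pow integrable_Dop Suc.prems)
  also have "\<dots> \<le> real m * (real m ^ n * L1_norm ((Dop h ^^ n) (Dop h g)))"
    by (intro mult_left_mono Suc.IH integrable_Dop Suc.prems) auto
  also have "(Dop h ^^ n) (Dop h g) = (Dop h ^^ Suc n) g"
    by (simp add: funpow_Suc_right del: funpow.simps)
  finally show ?case by (simp add: mult.assoc)
qed simp


context
  fixes f :: "real \<Rightarrow> real" and r :: nat and \<xi> :: real
  assumes f: "integrable lborel f" and xi: "\<xi> > 0"
begin

lemma omega_bdd: "bdd_above ((\<lambda>t. L1_norm (fdiff r t f)) ` {-\<xi>..\<xi>})"
  by (rule bdd_aboveI[of _ "2 ^ r * L1_norm f"])
     (auto simp: fdiff_funpow intro!: L1_Dop_pow f)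

lemma omega_upper: "\<bar>t\<bar> \<le> \<xi> \<Longrightarrow> L1_norm (fdiff r t f) \<le> omega1 r f \<xi>"
  unfolding omega1_def by (rule cSUP_upper[OF _ omega_bdd]) auto

lemma omega_nonneg: "omega1 r f \<xi> \<ge> 0"
  using omega_upper[of 0] L1_norm_nonneg[of "fdiff r 0 f"] xi by simp

lemma omega_bound: "L1_norm (fdiff r t f) \<le> (1 + \<bar>t\<bar> / \<xi>) ^ r * omega1 r f \<xi>"
proof (cases "\<bar>t\<bar> \<le> \<xi>")
  case True
  have "L1_norm (fdiff r t f) \<le> 1 * omega1 r f \<xi>" using omega_upper[OF True] by simp
  also have "\<dots> \<le> (1 + \<bar>t\<bar> / \<xi>) ^ r * omega1 r f \<xi>"
    using xi by (intro mult_right_mono omega_nonneg one_le_power) auto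
  finally show ?thesis .
next
  case False
  define m where "m = nat \<lceil>\<bar>t\<bar> / \<xi>\<rceil>"
  have gt1: "\<bar>t\<bar> / \<xi> > 1" using False xi by (simp add: field_simps)
  have mge: "real m \<ge> \<bar>t\<bar> / \<xi>" unfolding m_def using gt1 by linarith
  have mle: "real m \<le> 1 + \<bar>t\<bar> / \<xi>" unfolding m_def using gt1 by linarith
  have mpos: "real m > 0" using mge gt1 by linarith
  define s where "s = t / real m"
  have ts: "t = real m * s" unfolding s_def using mpos by simp
  have s: "\<bar>s\<bar> \<le> \<xi>" unfolding s_def using mpos xi mge
    by (simp add: abs_div field_simps)
  have "L1_norm (fdiff r t f) \<le> real m ^ r * L1_norm (fdiff r s f)"
    unfolding fdiff_funpow ts by (rule L1_Dop_mult[OF f])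
  also have "\<dots> \<le> real m ^ r * omega1 r f \<xi>"
    by (intro mult_left_mono omega_upper s) auto
  also have "\<dots> \<le> (1 + \<bar>t\<bar> / \<xi>) ^ r * omega1 r f \<xi>"
    by (intro mult_right_mono omega_nonneg power_mono mle) auto
  finally show ?thesis .
qed

end


lemma transl_cont:
  fixes f :: "real \<Rightarrow> real" and \<epsilon> :: real
  assumes cont: "continuous_on UNIV f" and fi: "integrable lborel f" and e: "\<epsilon> > 0"
  shows "\<exists>\<delta>>0. \<forall>h. \<bar>h\<bar> < \<delta> \<longrightarrow> L1_norm (Dop h f) \<le> \<epsilon>"
proof -
  have fm[measurable]: "f \<in> borel_measurable borel"
    using cont by (rule borel_measurable_continuous_onI)
  define A where "A R = {x::real. R \<le> \<bar>x\<bar>}" for R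
  have Am[measurable]: "A R \<in> sets borel" for R unfolding A_def by measurable
  define tail where "tail R = (LINT x|lborel. \<bar>f x\<bar> * indicator (A R) x)" for R
  have tint: "integrable lborel (\<lambda>x. \<bar>f x\<bar> * indicator (A R) x)" for R
    by (rule integrable_real_mult_indicator) (auto intro: fi)
  define sR where "sR R = (\<lambda>x. \<bar>f x\<bar> * indicator (A R) x)" for R
  have sRm: "sR R \<in> borel_measurable lborel" for R unfolding sR_def by measurable
  have "((\<lambda>R. integral\<^sup>L lborel (sR R)) \<longlongrightarrow> integral\<^sup>L lborel (\<lambda>x::real. 0::real)) at_top"
  proof (rule integral_dominated_convergence_at_top[OF _ sRm])
    show "integrable lborel (\<lambda>x. \<bar>f x\<bar>)" using fi by auto
    show "AE x in lborel. ((\<lambda>R. sR R x) \<longlongrightarrow> 0) at_top"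
    proof (rule AE_I2)
      fix x :: real
      have "\<forall>\<^sub>F R in at_top. sR R x = 0"
        using eventually_gt_at_top[of "\<bar>x\<bar>"] by eventually_elim (auto simp: A_def sR_def)
      thus "((\<lambda>R. sR R x) \<longlongrightarrow> 0) at_top"
        by (rule tendsto_eventually)
    qed
    show "\<forall>\<^sub>F R in at_top. AE x in lborel. norm (sR R x) \<le> \<bar>f x\<bar>"
      by (auto simp: indicator_def sR_def)
  qed auto
  moreover have "tail = (\<lambda>R. integral\<^sup>L lborel (sR R))"
    by (rule ext) (simp add: tail_def sR_def)
  ultimately have "(tail \<longlongrightarrow> 0) at_top" by simp
  hence "\<forall>\<^sub>F R in at_top. tail R < \<epsilon> / 4" using e by (intro order_tendstoD(2)) auto
  then obtain R0 where R0: "\<And>R. R \<ge> R0 \<Longrightarrow> tail R < \<epsilon> / 4"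
    by (auto simp: eventually_at_top_linorder)
  define R where "R = max R0 0 + 1"
  have R1: "R \<ge> 1" and tailR: "tail (R - 1) < \<epsilon> / 4" using R0[of "R - 1"] by (auto simp: R_def)
  define \<eta> where "\<eta> = \<epsilon> / (4 * R)"
  have eta: "\<eta> > 0" using e R1 by (simp add: \<eta>_def)
  have "uniformly_continuous_on {-R-1..R+1} f"
    by (rule compact_uniformly_continuous[OF continuous_on_subset[OF cont]]) auto
  then obtain d where d: "d > 0"
    and dd: "\<And>x x'. x \<in> {-R-1..R+1} \<Longrightarrow> x' \<in> {-R-1..R+1} \<Longrightarrow> dist x' x < d \<Longrightarrow> dist (f x') (f x) < \<eta>"
    unfolding uniformly_continuous_on_def using eta by metis
  show ?thesis
  proof (intro exI[of _ "min 1 d"] conjI allI impI)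
    show "min 1 d > 0" using d by simp
    fix h :: real assume h: "\<bar>h\<bar> < min 1 d"
    have pt: "\<bar>f (x + h) - f x\<bar> \<le> \<eta> * indicator {-R<..<R} x
        + \<bar>f (x + h)\<bar> * indicator (A (R - 1)) (x + h) + \<bar>f x\<bar> * indicator (A (R - 1)) x" for x
    proof (cases "\<bar>x\<bar> < R")
      case True
      have "dist (f (x + h)) (f x) < \<eta>"
        using True h by (intro dd) (auto simp: dist_real_def)
      thus ?thesis using True by (auto simp: dist_real_def indicator_def)
    next
      case False
      hence "x \<in> A (R - 1)" "x + h \<in> A (R - 1)" using h by (auto simp: A_def)
      thus ?thesis using False by (auto simp: indicator_def)
    qed
    have i1: "integrable lborel (\<lambda>x. \<eta> * indicator {-R<..<R} x)"
      using R1 by (intro integrable_mult_right integrable_real_indicator) auto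
    have i2: "integrable lborel (\<lambda>x. \<bar>f (x + h)\<bar> * indicator (A (R - 1)) (x + h))"
      by (rule integrable_shift[OF tint])
    have "L1_norm (Dop h f) \<le> (LINT x|lborel. \<eta> * indicator {-R<..<R} x
        + \<bar>f (x + h)\<bar> * indicator (A (R - 1)) (x + h) + \<bar>f x\<bar> * indicator (A (R - 1)) x)"
      unfolding L1_norm_def Dop_def
      by (intro integral_mono pt Bochner_Integration.integrable_add i1 i2 tint)
         (auto intro!: Bochner_Integration.integrable_diff integrable_shift fi)
    also have "\<dots> = (LINT x|lborel. \<eta> * indicator {-R<..<R} x)
        + (LINT x|lborel. \<bar>f (x + h)\<bar> * indicator (A (R - 1)) (x + h)) + tail (R - 1)"
      unfolding tail_def
      by (subst Bochner_Integration.integral_add, intro Bochner_Integration.integrable_add i1 i2 tint,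
          rule tint, subst Bochner_Integration.integral_add, rule i1, rule i2) simp
    also have "(LINT x|lborel. \<bar>f (x + h)\<bar> * indicator (A (R - 1)) (x + h)) = tail (R - 1)"
      unfolding tail_def
      using lborel_integral_real_affine[of 1 "\<lambda>x. \<bar>f x\<bar> * indicator (A (R - 1)) x" h]
      by (simp add: add.commute)
    also have "(LINT x|lborel. \<eta> * indicator {-R<..<R} x) = \<eta> * (2 * R)"
      using R1 by simp
    also have "\<eta> * (2 * R) = \<epsilon> / 2" using R1 by (simp add: \<eta>_def)
    finally show "L1_norm (Dop h f) \<le> \<epsilon>" using tailR by simp
  qed
qed


lemma even_pow_nonneg: "(y::real) ^ (2*p) \<ge> 0"
  by (simp add: power_mult)

lemma even_pow_pos1: "(y::real) ^ (2*p) + 1 > 0"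
  using even_pow_nonneg[of y p] by linarith

lemma K0:
  fixes p m :: nat and \<beta> :: real
  assumes p: "p \<ge> 1" and b: "\<beta> > (real m + 1) / (2 * real p)"
  defines "c \<equiv> 1 / (2 * real p)"
  defines "d \<equiv> (real m + 1) / (2 * real p)"
  shows "set_integrable lborel (einterval 0 \<infinity>) (\<lambda>t. t ^ m / (t ^ (2*p) + 1) powr \<beta>)"
    and "(LBINT t=0..\<infinity>. t ^ m / (t ^ (2*p) + 1) powr \<beta>) = c * Beta d (\<beta> - d)"
proof -
  define g where "g x = (x / (1 - x)) powr c" for x :: real
  define g' where "g' x = c * (x / (1 - x)) powr (c - 1) / (1 - x)^2" for x :: real
  define k where "k t = t ^ m / (t ^ (2*p) + 1) powr \<beta>" for t :: real
  have c: "c > 0" "\<beta> - d > 0" "c * (2 * real p) = 1" "d > 0" "d = c * real m + c"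
    using p b by (auto simp: c_def d_def field_simps)
  have deriv: "(g has_real_derivative g' x) (at x)" if "0 < x" "x < 1" for x
  proof -
    have "((\<lambda>x. x / (1 - x)) has_real_derivative 1 / (1 - x)^2) (at x)"
      using that by (auto intro!: derivative_eq_intros simp: field_simps power2_eq_square)
    from DERIV_fun_powr[OF this, of c] that show ?thesis
      unfolding g_def g'_def by (simp add: field_simps)
  qed
  have fg: "k (g x) * g' x = c * (x powr (d - 1) * (1 - x) powr (\<beta> - d - 1))" if "0 < x" "x < 1" for x
  proof -
    define y where "y = x / (1 - x)"
    have q: "y > 0" "1 - x > 0" using that by (auto simp: y_def)
    have gp: "(g x) ^ n = y powr (c * real n)" for n
    proof -
      have "(g x) ^ n = (g x) powr (real n)" 
        using q by (subst powr_realpow) (auto simp: g_def y_def)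
      also have "\<dots> = y powr (c * real n)" unfolding g_def y_def
        by (simp add: powr_powr)
      finally show ?thesis .
    qed
    have "(g x) ^ (2*p) = y" using gp[of "2*p"] c q by simp
    hence "g x ^ (2*p) + 1 = 1 / (1 - x)" using that by (simp add: y_def field_simps)
    hence "k (g x) = y powr (c * real m) / (1 / (1 - x)) powr \<beta>" by (simp add: k_def gp)
    also have "\<dots> = y powr (c * real m) * (1 - x) powr \<beta>" using q by (simp add: powr_divide)
    finally have kg: "k (g x) = y powr (c * real m) * (1 - x) powr \<beta>" .
    have "k (g x) * g' x = c * (y powr (c * real m) * y powr (c - 1)) * ((1 - x) powr \<beta> / (1 - x)^2)"
      unfolding kg g'_def y_def[symmetric] by simp
    also have "y powr (c * real m) * y powr (c - 1) = y powr (d - 1)"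
      using c by (simp add: powr_add[symmetric] algebra_simps)
    also have "y powr (d - 1) = x powr (d - 1) / (1 - x) powr (d - 1)"
      unfolding y_def using q that by (simp add: powr_divide)
    also have "(1 - x)^2 = (1 - x) powr 2" using q by (simp add: powr_realpow)
    also have "c * (x powr (d - 1) / (1 - x) powr (d - 1)) * ((1 - x) powr \<beta> / (1 - x) powr 2)
        = c * (x powr (d - 1) * ((1 - x) powr \<beta> / ((1 - x) powr (d - 1) * (1 - x) powr 2)))"
      by simp
    also have "(1 - x) powr (d - 1) * (1 - x) powr 2 = (1 - x) powr (d + 1)"
      by (simp add: powr_add[symmetric] add.commute)
    also have "(1 - x) powr \<beta> / (1 - x) powr (d + 1) = (1 - x) powr (\<beta> - d - 1)"
      by (simp add: powr_diff[symmetric] diff_diff_eq)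
    finally show ?thesis .
  qed
  have gA: "(g \<longlongrightarrow> 0) (at_right 0)"
    unfolding g_def using c by real_asymp
  have gB: "filterlim g at_top (at_left 1)"
    unfolding g_def using c by real_asymp
  have kcont: "isCont k y" for y
    unfolding k_def by (intro continuous_intros) (use even_pow_pos1[of y p] in auto)
  have g'cont: "isCont g' x" if "0 < x" "x < 1" for x
    unfolding g'_def using that by (intro continuous_intros) auto
  have g'nn: "g' x \<ge> 0" if "0 \<le> x" "x \<le> 1" for x
    unfolding g'_def using that c by (intro divide_nonneg_nonneg mult_nonneg_nonneg) auto
  have knn: "k (g x) \<ge> 0" if "0 < ereal x" "ereal x < 1" for x
    unfolding k_def g_def by simp
  have ei01: "einterval 0 1 = {0<..<(1::real)}" by (auto simp: einterval_def zero_ereal_def one_ereal_def)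
  have BI: "set_integrable lborel {0<..<1} (\<lambda>x. c * (x powr (d - 1) * (1 - x) powr (\<beta> - d - 1)))"
  proof -
    have "set_integrable lborel {0..1} (\<lambda>x. x powr (d - 1) * (1 - x) powr (\<beta> - d - 1))"
      using integrable_Beta[of d "\<beta> - d"] c by simp
    hence "set_integrable lborel {0<..<1} (\<lambda>x. x powr (d - 1) * (1 - x) powr (\<beta> - d - 1))"
      by (rule set_integrable_subset) auto
    thus ?thesis by (rule set_integrable_mult_right)
  qed
  have int_fg: "set_integrable lborel (einterval 0 1) (\<lambda>x. k (g x) * g' x)"
  proof -
    have "set_integrable lborel {0<..<1} (\<lambda>x. k (g x) * g' x) = set_integrable lborel {0<..<1} (\<lambda>x. c * (x powr (d - 1) * (1 - x) powr (\<beta> - d - 1)))"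
      by (rule set_integrable_cong) (auto simp: fg)
    thus ?thesis using BI ei01 by simp
  qed
  note sub = interval_integral_substitution_nonneg[of 0 1 g g' k 0 \<infinity>, OF _ _ _ _ _ _ _ _ int_fg]
  have A': "((ereal \<circ> g \<circ> real_of_ereal) \<longlongrightarrow> 0) (at_right 0)"
    using gA by (simp add: zero_ereal_def ereal_tendsto_simps)
  have B': "((ereal \<circ> g \<circ> real_of_ereal) \<longlongrightarrow> \<infinity>) (at_left 1)"
    using gB by (simp add: one_ereal_def ereal_tendsto_simps)
  note sub' = sub[OF _ deriv kcont g'cont knn g'nn A' B']
  have kk: "(\<lambda>t. t ^ m / (t ^ (2*p) + 1) powr \<beta>) = k" by (rule ext) (simp add: k_def)
  show "set_integrable lborel (einterval 0 \<infinity>) (\<lambda>t. t ^ m / (t ^ (2*p) + 1) powr \<beta>)"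
    unfolding kk by (rule sub'(1)) (auto simp: zero_ereal_def one_ereal_def)
  have "(LBINT t=0..\<infinity>. t ^ m / (t ^ (2*p) + 1) powr \<beta>) = (LBINT x=0..1. k (g x) * g' x)"
    unfolding kk by (rule sub'(2)) (auto simp: zero_ereal_def one_ereal_def)
  also have "\<dots> = (LBINT x:{0<..<1}. c * (x powr (d - 1) * (1 - x) powr (\<beta> - d - 1)))"
  proof -
    have "(LBINT x=0..1. k (g x) * g' x) = (LBINT x:{0<..<1}. k (g x) * g' x)"
      unfolding interval_lebesgue_integral_def ei01 by simp
    also have "\<dots> = (LBINT x:{0<..<1}. c * (x powr (d - 1) * (1 - x) powr (\<beta> - d - 1)))"
      by (rule set_lebesgue_integral_cong) (auto simp: fg)
    finally show ?thesis .
  qed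
  also have "\<dots> = c * Beta d (\<beta> - d)"
  proof -
    have "((\<lambda>x. x powr (d - 1) * (1 - x) powr (\<beta> - d - 1)) has_integral Beta d (\<beta> - d)) {0<..<1}"
      using has_integral_Beta_real[of d "\<beta> - d"] c by (simp add: has_integral_Icc_iff_Ioo)
    hence "((\<lambda>x. c * (x powr (d - 1) * (1 - x) powr (\<beta> - d - 1))) has_integral c * Beta d (\<beta> - d)) {0<..<1}"
      by (rule has_integral_mult_right)
    thus ?thesis using set_borel_integral_eq_integral(2)[OF BI] by (auto simp: has_integral_iff)
  qed
  finally show "(LBINT t=0..\<infinity>. t ^ m / (t ^ (2*p) + 1) powr \<beta>) = c * Beta d (\<beta> - d)" .
qed


lemma even_integral:
  fixes h :: "real \<Rightarrow> real"
  assumes si: "set_integrable lborel {0<..} h" and ev: "\<And>x. h (-x) = h x"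
    and hm: "h \<in> borel_measurable borel"
  shows "integrable lborel h" "integral\<^sup>L lborel h = 2 * (LINT x:{0<..}|lborel. h x)"
proof -
  define h1 where "h1 x = indicator {0<..} x * h x" for x :: real
  have i1: "integrable lborel h1" using si unfolding set_integrable_def h1_def by simp
  have i2: "integrable lborel (\<lambda>x. h1 (0 + (-1) * x))"
    by (rule lborel_integrable_real_affine[OF i1]) simp
  have ae: "AE x in lborel. h1 x + h1 (0 + (-1) * x) = h x"
    using AE_lborel_singleton[of 0]
    by eventually_elim (auto simp: h1_def indicator_def ev)
  have i3: "integrable lborel (\<lambda>x. h1 x + h1 (0 + (-1) * x))"
    by (rule Bochner_Integration.integrable_add[OF i1 i2])
  show "integrable lborel h"
    by (rule integrable_cong_AE_imp[OF i3 _ ae]) (use hm in simp)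
  have "integral\<^sup>L lborel h = integral\<^sup>L lborel (\<lambda>x. h1 x + h1 (0 + (-1) * x))"
    using ae hm borel_measurable_integrable[OF i3] by (intro integral_cong_AE) (auto simp: eq_commute)
  also have "\<dots> = integral\<^sup>L lborel h1 + integral\<^sup>L lborel (\<lambda>x. h1 (0 + (-1) * x))"
    by (rule Bochner_Integration.integral_add[OF i1 i2])
  also have "integral\<^sup>L lborel (\<lambda>x. h1 (0 + (-1) * x)) = integral\<^sup>L lborel h1"
    using lborel_integral_real_affine[of "-1" h1 0] by simp
  also have "integral\<^sup>L lborel h1 = (LINT x:{0<..}|lborel. h x)"
    by (simp add: set_lebesgue_integral_def h1_def[abs_def])
  finally show "integral\<^sup>L lborel h = 2 * (LINT x:{0<..}|lborel. h x)" by simp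
qed

lemma scale_integral:
  fixes h :: "real \<Rightarrow> real" and \<xi> :: real
  assumes hi: "integrable lborel h" and xi: "\<xi> > 0"
  shows "integrable lborel (\<lambda>t. h (t / \<xi>))" "integral\<^sup>L lborel (\<lambda>t. h (t / \<xi>)) = \<xi> * integral\<^sup>L lborel h"
proof -
  show "integrable lborel (\<lambda>t. h (t / \<xi>))"
    using lborel_integrable_real_affine[OF hi, of "1/\<xi>" 0] xi by simp
  show "integral\<^sup>L lborel (\<lambda>t. h (t / \<xi>)) = \<xi> * integral\<^sup>L lborel h"
    using lborel_integral_real_affine[of "\<xi>" "\<lambda>t. h (t / \<xi>)" 0] xi by simp
qed

lemma einterval_0_inf: "einterval 0 \<infinity> = ({0<..} :: real set)"
  by (auto simp: einterval_def zero_ereal_def)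

lemma LBINT_0_inf: "(LBINT t=0..\<infinity>. g t) = (LINT t:{0<..}|lborel. g t)"
  unfolding interval_lebesgue_integral_def einterval_0_inf by simp

lemma even_pow_ne: "(y::real) ^ (2 * p) + 1 \<noteq> 0"
  using even_pow_pos1[of y p] by linarith

lemma pow_ratio_cont: "continuous_on UNIV (\<lambda>u::real. (1 + \<bar>u\<bar>) ^ r / (u ^ (2 * a) + 1) powr \<beta>)"
  by (intro continuous_intros) (auto simp: even_pow_ne)

lemma ratio_cont: "continuous_on UNIV (\<lambda>u::real. 1 / (u ^ (2 * a) + 1) powr \<beta>)"
  by (intro continuous_intros) (auto simp: even_pow_ne)

lemma even_pow_neg: "(- u :: real) ^ (2 * a) = u ^ (2 * a)"
  by (simp add: power_mult)

lemma N1: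
  fixes a :: nat and \<beta> :: real
  assumes a: "a \<ge> 1" and b: "\<beta> > 1 / (2 * real a)"
  shows "integrable lborel (\<lambda>u. 1 / (u ^ (2 * a) + 1) powr \<beta>)"
    and "integral\<^sup>L lborel (\<lambda>u. 1 / (u ^ (2 * a) + 1) powr \<beta>)
       = Gamma (1 / (2 * real a)) * Gamma (\<beta> - 1 / (2 * real a)) / (real a * Gamma \<beta>)"
proof -
  have b': "\<beta> > (real 0 + 1) / (2 * real a)" using b by simp
  note k = K0[OF a b']
  have si: "set_integrable lborel {0<..} (\<lambda>u. 1 / (u ^ (2 * a) + 1) powr \<beta>)"
    using k(1) by (simp add: einterval_0_inf)
  have val: "(LINT t:{0<..}|lborel. 1 / (t ^ (2 * a) + 1) powr \<beta>)
      = 1 / (2 * real a) * Beta (1 / (2 * real a)) (\<beta> - 1 / (2 * real a))"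
    using k(2) by (simp add: LBINT_0_inf)
  have ev: "\<And>x. 1 / ((-x) ^ (2 * a) + 1) powr \<beta> = 1 / (x ^ (2 * a) + 1) powr \<beta>"
    by (simp add: even_pow_neg)
  have hm: "(\<lambda>u::real. 1 / (u ^ (2 * a) + 1) powr \<beta>) \<in> borel_measurable borel"
    by (rule borel_measurable_continuous_onI[OF ratio_cont])
  note E = even_integral[OF si ev hm]
  show "integrable lborel (\<lambda>u. 1 / (u ^ (2 * a) + 1) powr \<beta>)" by (rule E(1))
  have "1 / (2 * real a) > 0" using a by simp
  hence "\<beta> > 0" using b by linarith
  hence "Gamma \<beta> > 0" by (rule Gamma_real_pos)
  hence g: "Gamma \<beta> \<noteq> 0" by simp
  show "integral\<^sup>L lborel (\<lambda>u. 1 / (u ^ (2 * a) + 1) powr \<beta>)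
       = Gamma (1 / (2 * real a)) * Gamma (\<beta> - 1 / (2 * real a)) / (real a * Gamma \<beta>)"
    unfolding E(2) val Beta_def using g a by (simp add: field_simps)
qed

lemma N2:
  fixes a r :: nat and \<beta> :: real
  assumes a: "a \<ge> 1" and b: "\<beta> > (real r + 1) / (2 * real a)"
  shows "integrable lborel (\<lambda>u. (1 + \<bar>u\<bar>) ^ r / (u ^ (2 * a) + 1) powr \<beta>)"
    and "integral\<^sup>L lborel (\<lambda>u. (1 + \<bar>u\<bar>) ^ r / (u ^ (2 * a) + 1) powr \<beta>)
       = 2 * (LINT t:{0<..}|lborel. (1 + t) ^ r / (t ^ (2 * a) + 1) powr \<beta>)"
proof -
  have b0: "\<beta> > (real 0 + 1) / (2 * real a)"
  proof -
    have "(real 0 + 1) / (2 * real a) \<le> (real r + 1) / (2 * real a)" by (intro divide_right_mono) auto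
    thus ?thesis using b by linarith
  qed
  have s0: "set_integrable lborel {0<..} (\<lambda>u. u ^ 0 / (u ^ (2 * a) + 1) powr \<beta>)"
    using K0(1)[OF a b0] by (simp add: einterval_0_inf)
  have sr: "set_integrable lborel {0<..} (\<lambda>u. u ^ r / (u ^ (2 * a) + 1) powr \<beta>)"
    using K0(1)[OF a b] by (simp add: einterval_0_inf)
  have sb: "set_integrable lborel {0<..} (\<lambda>u. 2 ^ r * (u ^ 0 / (u ^ (2 * a) + 1) powr \<beta> + u ^ r / (u ^ (2 * a) + 1) powr \<beta>))"
  proof -
    have "integrable lborel (\<lambda>x. 2 ^ r * (indicator {0<..} x *\<^sub>R (x ^ 0 / (x ^ (2 * a) + 1) powr \<beta>)
         + indicator {0<..} x *\<^sub>R (x ^ r / (x ^ (2 * a) + 1) powr \<beta>)))"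
      using s0 sr unfolding set_integrable_def
      by (intro integrable_mult_right Bochner_Integration.integrable_add)
    moreover have "(\<lambda>x. 2 ^ r * (indicator {0<..} x *\<^sub>R (x ^ 0 / (x ^ (2 * a) + 1) powr \<beta>)
         + indicator {0<..} x *\<^sub>R (x ^ r / (x ^ (2 * a) + 1) powr \<beta>)))
       = (\<lambda>x. indicator {0<..} x *\<^sub>R (2 ^ r * (x ^ 0 / (x ^ (2 * a) + 1) powr \<beta> + x ^ r / (x ^ (2 * a) + 1) powr \<beta>)))"
      by (rule ext) (simp add: algebra_simps)
    ultimately show ?thesis unfolding set_integrable_def by (metis (no_types, lifting))
  qed
  have hm: "(\<lambda>u::real. (1 + \<bar>u\<bar>) ^ r / (u ^ (2 * a) + 1) powr \<beta>) \<in> borel_measurable borel"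
    by (rule borel_measurable_continuous_onI[OF pow_ratio_cont])
  have si: "set_integrable lborel {0<..} (\<lambda>u. (1 + \<bar>u\<bar>) ^ r / (u ^ (2 * a) + 1) powr \<beta>)"
  proof (rule set_integrable_bound[OF sb])
    show "set_borel_measurable lborel {0<..} (\<lambda>u. (1 + \<bar>u\<bar>) ^ r / (u ^ (2 * a) + 1) powr \<beta>)"
      unfolding set_borel_measurable_def using hm by measurable
    show "AE x in lborel. x \<in> {0<..} \<longrightarrow> norm ((1 + \<bar>x\<bar>) ^ r / (x ^ (2 * a) + 1) powr \<beta>)
        \<le> norm (2 ^ r * (x ^ 0 / (x ^ (2 * a) + 1) powr \<beta> + x ^ r / (x ^ (2 * a) + 1) powr \<beta>))"
    proof (rule AE_I2, rule impI)
      fix x :: real assume x: "x \<in> {0<..}"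
      have den: "(x ^ (2 * a) + 1) powr \<beta> > 0" using even_pow_pos1[of x a] by simp
      have "(1 + x) ^ r \<le> 2 ^ r * (1 + x ^ r)"
      proof (cases "x \<le> 1")
        case True
        have "(1 + x) ^ r \<le> 2 ^ r" using True x by (intro power_mono) auto
        moreover have "(2::real) ^ r * 1 \<le> 2 ^ r * (1 + x ^ r)"
          using x by (intro mult_left_mono) auto
        ultimately show ?thesis by linarith
      next
        case False
        have "(1 + x) ^ r \<le> (2 * x) ^ r" using False x by (intro power_mono) auto
        moreover have "(2 * x) ^ r = 2 ^ r * x ^ r" by (simp add: power_mult_distrib)
        moreover have "(2::real) ^ r * x ^ r \<le> 2 ^ r * (1 + x ^ r)"
          by (intro mult_left_mono) auto
        ultimately show ?thesis by linarith
      qed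
      thus "norm ((1 + \<bar>x\<bar>) ^ r / (x ^ (2 * a) + 1) powr \<beta>)
        \<le> norm (2 ^ r * (x ^ 0 / (x ^ (2 * a) + 1) powr \<beta> + x ^ r / (x ^ (2 * a) + 1) powr \<beta>))"
        using x den by (simp add: add_divide_distrib[symmetric] divide_right_mono)
    qed
  qed
  have ev: "\<And>x. (1 + \<bar>-x\<bar>) ^ r / ((-x) ^ (2 * a) + 1) powr \<beta> = (1 + \<bar>x\<bar>) ^ r / (x ^ (2 * a) + 1) powr \<beta>"
    by (simp add: even_pow_neg)
  note E = even_integral[OF si ev hm]
  show "integrable lborel (\<lambda>u. (1 + \<bar>u\<bar>) ^ r / (u ^ (2 * a) + 1) powr \<beta>)" by (rule E(1))
  show "integral\<^sup>L lborel (\<lambda>u. (1 + \<bar>u\<bar>) ^ r / (u ^ (2 * a) + 1) powr \<beta>)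
       = 2 * (LINT t:{0<..}|lborel. (1 + t) ^ r / (t ^ (2 * a) + 1) powr \<beta>)"
    unfolding E(2) by (auto intro!: set_lebesgue_integral_cong)
qed


lemma alt0:
  assumes "r \<ge> 1"
  shows "(\<Sum>i=0..r. (-1) ^ (r - i) * real (r choose i)) = 0"
proof -
  have e: "(-1::real) ^ (r - i) = (-1) ^ r * (-1) ^ i" if "i \<le> r" for i
  proof -
    have "(-1::real) ^ r = (-1) ^ (r - i) * (-1) ^ i"
      using that by (simp add: power_add[symmetric])
    hence "(-1::real) ^ r * (-1) ^ i = (-1) ^ (r - i) * ((-1) ^ i * (-1) ^ i)" by simp
    also have "(-1::real) ^ i * (-1) ^ i = 1" by (simp add: power_add[symmetric])
    finally show ?thesis by simp
  qed
  have "(\<Sum>i=0..r. (-1) ^ (r - i) * real (r choose i)) = (\<Sum>i\<le>r. (-1) ^ r * ((-1) ^ i * real (r choose i)))"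
    by (auto simp: atLeast0AtMost e intro!: sum.cong)
  also have "\<dots> = (-1) ^ r * (\<Sum>i\<le>r. (-1) ^ i * real (r choose i))"
    by (simp add: sum_distrib_left)
  also have "(\<Sum>i\<le>r. (-1) ^ i * real (r choose i)) = (0::real)"
    using assms by (intro choose_alternating_sum) auto
  finally show ?thesis by simp
qed

lemma alpha_sum:
  fixes u :: "nat \<Rightarrow> real"
  assumes "r \<ge> 1"
  shows "(\<Sum>j=0..r. alpha_coef r j * u j) = u 0 + (\<Sum>j=0..r. (-1) ^ (r - j) * real (r choose j) * u j)"
proof -
  have split: "(\<Sum>j=0..r. g j) = g 0 + (\<Sum>j=1..r. g j)" for g :: "nat \<Rightarrow> real"
    by (simp add: sum.atLeast_Suc_atMost)
  have S: "(\<Sum>i=1..r. (-1) ^ (r - i) * real (r choose i)) = - ((-1) ^ r)"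
    using alt0[OF assms] split[of "\<lambda>i. (-1) ^ (r - i) * real (r choose i)"] by simp
  have "(\<Sum>j=0..r. alpha_coef r j * u j) = alpha_coef r 0 * u 0 + (\<Sum>j=1..r. alpha_coef r j * u j)"
    by (rule split)
  also have "(\<Sum>j=1..r. alpha_coef r j * u j) = (\<Sum>j=1..r. (-1) ^ (r - j) * real (r choose j) * u j)"
    by (intro sum.cong) (auto simp: alpha_coef_def)
  also have "alpha_coef r 0 = 1 + (-1) ^ r" using S by (simp add: alpha_coef_def)
  also have "u 0 + (\<Sum>j=0..r. (-1) ^ (r - j) * real (r choose j) * u j)
      = u 0 + ((-1) ^ r * u 0 + (\<Sum>j=1..r. (-1) ^ (r - j) * real (r choose j) * u j))"
    by (subst split) simp
  ultimately show ?thesis by (simp add: algebra_simps)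
qed

lemma omega_tendsto:
  fixes f :: "real \<Rightarrow> real"
  assumes cont: "continuous_on UNIV f" and fi: "integrable lborel f" and r: "r \<ge> 1"
  shows "((\<lambda>\<eta>. omega1 r f \<eta>) \<longlongrightarrow> 0) (at_right 0)"
proof (rule order_tendstoI)
  fix y :: real assume "y < 0"
  show "\<forall>\<^sub>F \<eta> in at_right 0. y < omega1 r f \<eta>"
    unfolding eventually_at_right_field
    using omega_nonneg[OF fi] \<open>y < 0\<close> by (intro exI[of _ 1]) (auto intro: less_le_trans)
next
  fix y :: real assume y: "y > 0"
  define \<epsilon> where "\<epsilon> = y / 2 / 2 ^ (r - 1)"
  have e: "\<epsilon> > 0" using y by (simp add: \<epsilon>_def)
  obtain \<delta> where d: "\<delta> > 0" and dd: "\<And>h. \<bar>h\<bar> < \<delta> \<Longrightarrow> L1_norm (Dop h f) \<le> \<epsilon>"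
    using transl_cont[OF cont fi e] by blast
  show "\<forall>\<^sub>F \<eta> in at_right 0. omega1 r f \<eta> < y"
    unfolding eventually_at_right_field
  proof (intro exI[of _ \<delta>] conjI allI impI)
    show "\<delta> > 0" by (rule d)
    fix \<eta> :: real assume \<eta>: "\<eta> > 0" "\<eta> < \<delta>"
    have "omega1 r f \<eta> \<le> 2 ^ (r - 1) * \<epsilon>"
      unfolding omega1_def
    proof (rule cSUP_least)
      show "{-\<eta>..\<eta>} \<noteq> {}" using \<eta> by simp
      fix t assume t: "t \<in> {-\<eta>..\<eta>}"
      have "fdiff r t f = (Dop t ^^ Suc (r - 1)) f" using r by (simp add: fdiff_funpow)
      also have "\<dots> = (Dop t ^^ (r - 1)) (Dop t f)"
        by (simp add: funpow_Suc_right del: funpow.simps)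
      finally have "L1_norm (fdiff r t f) \<le> 2 ^ (r - 1) * L1_norm (Dop t f)"
        using L1_Dop_pow[OF integrable_Dop[OF fi]] by simp
      also have "\<dots> \<le> 2 ^ (r - 1) * \<epsilon>"
        using t \<eta> by (intro mult_left_mono dd) auto
      finally show "L1_norm (fdiff r t f) \<le> 2 ^ (r - 1) * \<epsilon>" .
    qed
    also have "\<dots> < y" using y by (simp add: \<epsilon>_def)
    finally show "omega1 r f \<eta> < y" .
  qed
qed

lemma main_xi:
  fixes r a :: nat and \<beta> \<xi> :: real and f :: "real \<Rightarrow> real"
  assumes r: "r \<ge> 1" and a: "a \<ge> 1"
    and b: "\<beta> > (real r + 1) / (2 * real a)"
    and cont: "continuous_on UNIV f" and fi: "integrable lborel f"
    and xi: "\<xi> > 0"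
  shows "integrable lborel (\<lambda>x. M_op r a \<beta> \<xi> f x - f x)
    \<and> L1_norm (\<lambda>x. M_op r a \<beta> \<xi> f x - f x)
        \<le> 2 * real a * Gamma \<beta> / (Gamma (1 / (2 * real a)) * Gamma (\<beta> - 1 / (2 * real a)))
           * (LINT t:{0<..}|lborel. (1 + t) ^ r / (t ^ (2 * a) + 1) powr \<beta>)
           * omega1 r f \<xi>"
proof -
  have fm[measurable]: "f \<in> borel_measurable borel"
    using cont by (rule borel_measurable_continuous_onI)
  define c where "c = 1 / (2 * real a)"
  define C0 where "C0 = Gamma c * Gamma (\<beta> - c)"
  define I where "I = (LINT t:{0<..}|lborel. (1 + t) ^ r / (t ^ (2 * a) + 1) powr \<beta>)"
  define K where "K t = 1 / (t ^ (2 * a) + \<xi> ^ (2 * a)) powr \<beta>" for t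
  define W where "W = W_const a \<beta> \<xi>"
  define \<omega> where "\<omega> = omega1 r f \<xi>"
  define k1 where "k1 u = 1 / (u ^ (2 * a) + 1) powr \<beta>" for u :: real
  define wg where "wg u = (1 + \<bar>u\<bar>) ^ r / (u ^ (2 * a) + 1) powr \<beta>" for u :: real
  define P where "P = \<xi> powr (- (2 * real a * \<beta>))"
  have c: "c > 0" using a by (simp add: c_def)
  have b1: "\<beta> > c"
  proof -
    have "(real 0 + 1) / (2 * real a) \<le> (real r + 1) / (2 * real a)" by (intro divide_right_mono) auto
    thus ?thesis using b by (simp add: c_def)
  qed
  have G: "Gamma \<beta> > 0" "Gamma c > 0" "Gamma (\<beta> - c) > 0" using b1 c by auto
  have C0: "C0 > 0" using G by (simp add: C0_def)
  have W: "W = Gamma \<beta> * real a * \<xi> powr (2 * real a * \<beta> - 1) / C0"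
    by (simp add: W_def W_const_def C0_def c_def)
  have Wpos: "W > 0" using W G C0 a xi by simp
  have Ppos: "P > 0" using xi by (simp add: P_def)
  have Kid: "K t = P * k1 (t / \<xi>)" for t
  proof -
    have "t ^ (2 * a) + \<xi> ^ (2 * a) = \<xi> ^ (2 * a) * ((t / \<xi>) ^ (2 * a) + 1)"
      using xi by (simp add: power_divide field_simps)
    hence "(t ^ (2 * a) + \<xi> ^ (2 * a)) powr \<beta> = (\<xi> ^ (2 * a)) powr \<beta> * ((t / \<xi>) ^ (2 * a) + 1) powr \<beta>"
      using even_pow_pos1[of "t / \<xi>" a] xi by (simp add: powr_mult)
    also have "(\<xi> ^ (2 * a)) powr \<beta> = \<xi> powr (2 * real a * \<beta>)"
      using xi by (simp add: powr_realpow[symmetric] powr_powr)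
    finally show ?thesis
      unfolding K_def k1_def P_def using xi by (simp add: powr_minus_divide)
  qed
  have Kwid: "(1 + \<bar>t\<bar> / \<xi>) ^ r * K t = P * wg (t / \<xi>)" for t
    unfolding Kid k1_def wg_def using xi by (simp add: abs_div)
  note n1 = N1[OF a b1[unfolded c_def]]
  note n2 = N2[OF a b]
  have k1i: "integrable lborel k1" using n1(1) by (simp add: k1_def[abs_def])
  have k1v: "integral\<^sup>L lborel k1 = C0 / (real a * Gamma \<beta>)"
    using n1(2) by (simp add: k1_def[abs_def] C0_def c_def)
  have wgi: "integrable lborel wg" using n2(1) by (simp add: wg_def[abs_def])
  have wgv: "integral\<^sup>L lborel wg = 2 * I"
    using n2(2) by (simp add: wg_def[abs_def] I_def)
  have Ki: "integrable lborel K"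
    using scale_integral(1)[OF k1i xi] by (simp add: Kid[abs_def])
  have Kv: "integral\<^sup>L lborel K = P * (\<xi> * (C0 / (real a * Gamma \<beta>)))"
    using scale_integral(2)[OF k1i xi] by (simp add: Kid[abs_def] k1v)
  have Kwi: "integrable lborel (\<lambda>t. (1 + \<bar>t\<bar> / \<xi>) ^ r * K t)"
    using scale_integral(1)[OF wgi xi] by (simp add: Kwid)
  have Kwv: "integral\<^sup>L lborel (\<lambda>t. (1 + \<bar>t\<bar> / \<xi>) ^ r * K t) = P * (\<xi> * (2 * I))"
    using scale_integral(2)[OF wgi xi] by (simp add: Kwid wgv)
  have WP: "W * (P * \<xi>) = Gamma \<beta> * real a / C0"
  proof -
    have "\<xi> powr (2 * real a * \<beta> - 1) * (P * \<xi>)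
        = \<xi> powr (2 * real a * \<beta> - 1) * \<xi> powr (- (2 * real a * \<beta>)) * \<xi> powr 1"
      unfolding P_def using xi by simp
    also have "\<dots> = \<xi> powr (2 * real a * \<beta> - 1 + (- (2 * real a * \<beta>)) + 1)"
      by (simp only: powr_add)
    also have "\<dots> = 1" using xi by simp
    finally show ?thesis unfolding W by (simp add: field_simps)
  qed
  have WK: "W * integral\<^sup>L lborel K = 1"
  proof -
    have "W * integral\<^sup>L lborel K = (W * (P * \<xi>)) * (C0 / (real a * Gamma \<beta>))"
      unfolding Kv by (simp add: ac_simps)
    also have "\<dots> = 1" unfolding WP using G C0 a by (simp add: field_simps)
    finally show ?thesis .
  qed
  have WKw: "W * \<omega> * integral\<^sup>L lborel (\<lambda>t. (1 + \<bar>t\<bar> / \<xi>) ^ r * K t)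
      = 2 * real a * Gamma \<beta> / C0 * I * \<omega>"
  proof -
    have "W * \<omega> * integral\<^sup>L lborel (\<lambda>t. (1 + \<bar>t\<bar> / \<xi>) ^ r * K t) = (W * (P * \<xi>)) * (2 * I) * \<omega>"
      unfolding Kwv by (simp add: ac_simps)
    also have "\<dots> = 2 * real a * Gamma \<beta> / C0 * I * \<omega>" unfolding WP by (simp add: field_simps)
    finally show ?thesis .
  qed
  have denpos: "t ^ (2 * a) + \<xi> ^ (2 * a) > 0" for t
    using even_pow_nonneg[of t a] xi by (simp add: add_nonneg_pos)
  have Kpos: "K t > 0" for t using denpos[of t] by (simp add: K_def)
  define B where "B = 1 / (\<xi> ^ (2 * a)) powr \<beta>"
  have Bpos: "B > 0" using xi by (simp add: B_def)
  have Kbd: "K t \<le> B" for t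
  proof -
    have "(\<xi> ^ (2 * a)) powr \<beta> \<le> (t ^ (2 * a) + \<xi> ^ (2 * a)) powr \<beta>"
      using even_pow_nonneg[of t a] b1 c xi by (intro powr_mono2) auto
    thus ?thesis unfolding K_def B_def using xi denpos[of t]
      by (intro divide_left_mono) (auto intro!: mult_pos_pos)
  qed
  have Kcont: "continuous_on UNIV K"
    unfolding K_def[abs_def] using denpos
    by (intro continuous_intros) (auto simp: less_imp_neq[symmetric] intro: less_imp_neq[symmetric])
  have Km[measurable]: "K \<in> borel_measurable borel"
    by (rule borel_measurable_continuous_onI[OF Kcont])
  define F where "F x t = fdiff r t f x * K t" for x t
  have Fm[measurable]: "(\<lambda>(x, t). F x t) \<in> borel_measurable (lborel \<Otimes>\<^sub>M lborel)"
    unfolding F_def fdiff_def by measurable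
  have Ffib: "integrable lborel (F x)" for x
  proof -
    have ij: "integrable lborel (\<lambda>t. f (x + real j * t) * K t)" for j
    proof (cases "j = 0")
      case True
      thus ?thesis using integrable_mult_right[OF Ki, of "f x"] by simp
    next
      case False
      have fa: "integrable lborel (\<lambda>t. f (x + real j * t))"
        using lborel_integrable_real_affine[OF fi, of "real j" x] False by simp
      show ?thesis
      proof (rule Bochner_Integration.integrable_bound[OF integrable_mult_right[OF fa, of B]])
        show "(\<lambda>t. f (x + real j * t) * K t) \<in> borel_measurable lborel" by measurable
        show "AE t in lborel. norm (f (x + real j * t) * K t) \<le> norm (B * f (x + real j * t))"
        proof (rule AE_I2)
          fix t
          have "\<bar>f (x + real j * t)\<bar> * K t \<le> \<bar>f (x + real j * t)\<bar> * B"
            by (intro mult_left_mono Kbd) auto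
          thus "norm (f (x + real j * t) * K t) \<le> norm (B * f (x + real j * t))"
            using Kpos[of t] Bpos by (simp add: abs_mult mult.commute)
        qed
      qed
    qed
    have "F x = (\<lambda>t. \<Sum>j=0..r. ((-1) ^ (r - j) * real (r choose j)) * (f (x + real j * t) * K t))"
      by (rule ext) (simp add: F_def fdiff_def sum_distrib_right sum_distrib_left ac_simps)
    thus ?thesis using ij by (simp add: Bochner_Integration.integrable_sum integrable_mult_right)
  qed
  have GM: "(\<lambda>x. M_op r a \<beta> \<xi> f x - f x) = (\<lambda>x. W * integral\<^sup>L lborel (F x))"
  proof (rule ext)
    fix x
    have eq: "(\<Sum>j=0..r. alpha_coef r j * f (x + real j * t)) / (t ^ (2 * a) + \<xi> ^ (2 * a)) powr \<beta>
        = f x * K t + F x t" for t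
      using alpha_sum[OF r, of "\<lambda>j. f (x + real j * t)"]
      by (simp add: F_def K_def fdiff_def divide_simps)
    have "M_op r a \<beta> \<xi> f x = W * (LINT t|lborel. f x * K t + F x t)"
      unfolding M_op_def W_def eq ..
    also have "(LINT t|lborel. f x * K t + F x t) = f x * integral\<^sup>L lborel K + integral\<^sup>L lborel (F x)"
      using Ki Ffib[of x] by (simp add: Bochner_Integration.integral_add integrable_mult_right)
    finally have "M_op r a \<beta> \<xi> f x = f x * (W * integral\<^sup>L lborel K) + W * integral\<^sup>L lborel (F x)"
      by (simp add: algebra_simps)
    thus "M_op r a \<beta> \<xi> f x - f x = W * integral\<^sup>L lborel (F x)" unfolding WK by simp
  qed
  have Gm: "(\<lambda>x. W * integral\<^sup>L lborel (F x)) \<in> borel_measurable lborel"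
    using lborel.borel_measurable_lebesgue_integral[OF Fm] by measurable
  have \<omega>nn: "\<omega> \<ge> 0" unfolding \<omega>_def by (rule omega_nonneg[OF fi xi])
  have fdi: "integrable lborel (fdiff r t f)" for t
    unfolding fdiff_funpow by (rule integrable_Dop_pow[OF fi])
  have Fabs_m[measurable]: "(\<lambda>(x, t). ennreal \<bar>F x t\<bar>) \<in> borel_measurable (lborel \<Otimes>\<^sub>M lborel)"
    using Fm by measurable
  have inner: "(\<integral>\<^sup>+ x. ennreal \<bar>F x t\<bar> \<partial>lborel) \<le> ennreal ((1 + \<bar>t\<bar> / \<xi>) ^ r * K t * \<omega>)" for t
  proof -
    have "(\<integral>\<^sup>+ x. ennreal \<bar>F x t\<bar> \<partial>lborel) = (\<integral>\<^sup>+ x. ennreal (K t) * ennreal \<bar>fdiff r t f x\<bar> \<partial>lborel)"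
      using Kpos[of t] by (intro nn_integral_cong) (simp add: F_def abs_mult ennreal_mult' mult.commute)
    also have "\<dots> = ennreal (K t) * (\<integral>\<^sup>+ x. ennreal \<bar>fdiff r t f x\<bar> \<partial>lborel)"
      using fdi[of t] by (intro nn_integral_cmult) auto
    also have "(\<integral>\<^sup>+ x. ennreal \<bar>fdiff r t f x\<bar> \<partial>lborel) = ennreal (L1_norm (fdiff r t f))"
      unfolding L1_norm_def using fdi[of t] by (intro nn_integral_eq_integral) auto
    also have "ennreal (K t) * ennreal (L1_norm (fdiff r t f)) = ennreal (K t * L1_norm (fdiff r t f))"
      using Kpos[of t] by (simp add: ennreal_mult')
    also have "\<dots> \<le> ennreal ((1 + \<bar>t\<bar> / \<xi>) ^ r * K t * \<omega>)"
    proof (rule ennreal_leI)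
      have "K t * L1_norm (fdiff r t f) \<le> K t * ((1 + \<bar>t\<bar> / \<xi>) ^ r * \<omega>)"
        unfolding \<omega>_def using Kpos[of t] by (intro mult_left_mono omega_bound[OF fi xi]) auto
      thus "K t * L1_norm (fdiff r t f) \<le> (1 + \<bar>t\<bar> / \<xi>) ^ r * K t * \<omega>" by (simp add: ac_simps)
    qed
    finally show ?thesis .
  qed
  have Gbound: "(\<integral>\<^sup>+ x. ennreal \<bar>W * integral\<^sup>L lborel (F x)\<bar> \<partial>lborel)
      \<le> ennreal (2 * real a * Gamma \<beta> / C0 * I * \<omega>)"
  proof -
    have "(\<integral>\<^sup>+ x. ennreal \<bar>W * integral\<^sup>L lborel (F x)\<bar> \<partial>lborel)
        \<le> (\<integral>\<^sup>+ x. ennreal W * (\<integral>\<^sup>+ t. ennreal \<bar>F x t\<bar> \<partial>lborel) \<partial>lborel)"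
    proof (rule nn_integral_mono)
      fix x
      have "ennreal \<bar>W * integral\<^sup>L lborel (F x)\<bar> = ennreal W * ennreal (norm (integral\<^sup>L lborel (F x)))"
        using Wpos by (simp add: abs_mult ennreal_mult')
      also have "\<dots> \<le> ennreal W * (\<integral>\<^sup>+ t. ennreal (norm (F x t)) \<partial>lborel)"
        by (intro mult_left_mono integral_norm_bound_ennreal Ffib) auto
      finally show "ennreal \<bar>W * integral\<^sup>L lborel (F x)\<bar> \<le> ennreal W * (\<integral>\<^sup>+ t. ennreal \<bar>F x t\<bar> \<partial>lborel)"
        by simp
    qed
    also have "\<dots> = ennreal W * (\<integral>\<^sup>+ x. (\<integral>\<^sup>+ t. ennreal \<bar>F x t\<bar> \<partial>lborel) \<partial>lborel)"
      by (rule nn_integral_cmult) measurable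
    also have "(\<integral>\<^sup>+ x. (\<integral>\<^sup>+ t. ennreal \<bar>F x t\<bar> \<partial>lborel) \<partial>lborel)
        = (\<integral>\<^sup>+ t. (\<integral>\<^sup>+ x. ennreal \<bar>F x t\<bar> \<partial>lborel) \<partial>lborel)"
      by (rule lborel_pair.Fubini'[symmetric]) (rule Fabs_m)
    also have "\<dots> \<le> (\<integral>\<^sup>+ t. ennreal ((1 + \<bar>t\<bar> / \<xi>) ^ r * K t * \<omega>) \<partial>lborel)"
      by (rule nn_integral_mono) (rule inner)
    also have "\<dots> = ennreal (integral\<^sup>L lborel (\<lambda>t. (1 + \<bar>t\<bar> / \<xi>) ^ r * K t * \<omega>))"
    proof (rule nn_integral_eq_integral)
      show "integrable lborel (\<lambda>t. (1 + \<bar>t\<bar> / \<xi>) ^ r * K t * \<omega>)"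
        using Kwi by (rule integrable_mult_left)
      show "AE t in lborel. 0 \<le> (1 + \<bar>t\<bar> / \<xi>) ^ r * K t * \<omega>"
      proof (rule AE_I2)
        fix t
        have "0 \<le> (1 + \<bar>t\<bar> / \<xi>)" using xi by simp
        thus "0 \<le> (1 + \<bar>t\<bar> / \<xi>) ^ r * K t * \<omega>"
          using Kpos[of t] \<omega>nn by (intro mult_nonneg_nonneg) auto
      qed
    qed
    also have "integral\<^sup>L lborel (\<lambda>t. (1 + \<bar>t\<bar> / \<xi>) ^ r * K t * \<omega>)
        = \<omega> * integral\<^sup>L lborel (\<lambda>t. (1 + \<bar>t\<bar> / \<xi>) ^ r * K t)"
      by (simp add: mult.commute)
    finally have "(\<integral>\<^sup>+ x. ennreal \<bar>W * integral\<^sup>L lborel (F x)\<bar> \<partial>lborel)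
        \<le> ennreal W * ennreal (\<omega> * integral\<^sup>L lborel (\<lambda>t. (1 + \<bar>t\<bar> / \<xi>) ^ r * K t))"
      by (simp add: mult_left_mono)
    also have "\<dots> = ennreal (W * \<omega> * integral\<^sup>L lborel (\<lambda>t. (1 + \<bar>t\<bar> / \<xi>) ^ r * K t))"
      using Wpos by (simp add: ennreal_mult' mult.assoc)
    finally show ?thesis unfolding WKw .
  qed
  have Gi: "integrable lborel (\<lambda>x. W * integral\<^sup>L lborel (F x))"
    by (rule integrableI_bounded[OF Gm]) (use Gbound in \<open>auto simp: top.not_eq_extremum intro: le_less_trans\<close>)
  have "ennreal (L1_norm (\<lambda>x. W * integral\<^sup>L lborel (F x)))
      = (\<integral>\<^sup>+ x. ennreal \<bar>W * integral\<^sup>L lborel (F x)\<bar> \<partial>lborel)"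
    unfolding L1_norm_def using Gi by (intro nn_integral_eq_integral[symmetric]) auto
  also note Gbound
  finally have Le: "ennreal (L1_norm (\<lambda>x. W * integral\<^sup>L lborel (F x))) \<le> ennreal (2 * real a * Gamma \<beta> / C0 * I * \<omega>)" .
  have Inn: "I \<ge> 0" unfolding I_def set_lebesgue_integral_def
    by (intro Bochner_Integration.integral_nonneg) (auto simp: indicator_def)
  have "0 \<le> 2 * real a * Gamma \<beta> / C0 * I * \<omega>"
    using G C0 \<omega>nn Inn by (intro mult_nonneg_nonneg divide_nonneg_pos) auto
  hence L: "L1_norm (\<lambda>x. W * integral\<^sup>L lborel (F x)) \<le> 2 * real a * Gamma \<beta> / C0 * I * \<omega>"
    using Le by (simp add: ennreal_le_iff)
  show ?thesis unfolding GM using Gi L by (simp add: C0_def c_def I_def \<omega>_def)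
qed

theorem proposition2:
  fixes r a :: nat and \<beta> \<xi> :: real and f :: "real \<Rightarrow> real"
  assumes "r \<ge> 1" and "a \<ge> 1"
    and "\<beta> > (real r + 1) / (2 * real a)"
    and "continuous_on UNIV f" and "integrable lborel f"
    and "\<xi> > 0"
  shows "integrable lborel (\<lambda>x. M_op r a \<beta> \<xi> f x - f x)
    \<and> L1_norm (\<lambda>x. M_op r a \<beta> \<xi> f x - f x)
        \<le> 2 * real a * Gamma \<beta> / (Gamma (1 / (2 * real a)) * Gamma (\<beta> - 1 / (2 * real a)))
           * (LINT t:{0<..}|lborel. (1 + t) ^ r / (t ^ (2 * a) + 1) powr \<beta>)
           * omega1 r f \<xi>
    \<and> ((\<lambda>\<eta>. L1_norm (\<lambda>x. M_op r a \<beta> \<eta> f x - f x)) \<longlongrightarrow> 0) (at_right 0)"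
proof -
  note mx = main_xi[OF assms(1-5)]
  define C where "C = 2 * real a * Gamma \<beta> / (Gamma (1 / (2 * real a)) * Gamma (\<beta> - 1 / (2 * real a)))
           * (LINT t:{0<..}|lborel. (1 + t) ^ r / (t ^ (2 * a) + 1) powr \<beta>)"
  have lim: "((\<lambda>\<eta>. L1_norm (\<lambda>x. M_op r a \<beta> \<eta> f x - f x)) \<longlongrightarrow> 0) (at_right 0)"
  proof (rule tendsto_sandwich[where f="\<lambda>_. 0" and h="\<lambda>\<eta>. C * omega1 r f \<eta>"])
    show "\<forall>\<^sub>F \<eta> in at_right 0. 0 \<le> L1_norm (\<lambda>x. M_op r a \<beta> \<eta> f x - f x)"
      by (intro always_eventually allI L1_norm_nonneg)
    show "\<forall>\<^sub>F \<eta> in at_right 0. L1_norm (\<lambda>x. M_op r a \<beta> \<eta> f x - f x) \<le> C * omega1 r f \<eta>"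
      using eventually_at_right_less[of "0::real"]
      by eventually_elim (use mx in \<open>simp add: C_def\<close>)
    show "((\<lambda>_. 0) \<longlongrightarrow> (0::real)) (at_right 0)" by simp
    show "((\<lambda>\<eta>. C * omega1 r f \<eta>) \<longlongrightarrow> 0) (at_right 0)"
      using tendsto_mult_right_zero[OF omega_tendsto[OF assms(4,5,1)], of C] by simp
  qed
  show ?thesis using mx[OF assms(6)] lim by blast
qed


end
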